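(* Let $(X,d)$ be a metric space with betweenness exponent $t_0=t_0(d)$, and let $W\subseteq X$. Then for every $\varepsilon>0$, $$\mathcal M^*_{2^{1/t_0}\varepsilon}(W)\le \hat{\mathcal N}^X_\varepsilon(W)\le \hat{\mathcal N}_\varepsilon(W)\le \hat{\mathcal M}_\varepsilon(W)\le \mathcal M^*_\varepsilon(W).$$
   Context: Closed balls: $B(c,r)=\{x\in X:d(x,c)\le r\}$. A set $C\subseteq X$ is an $\varepsilon$-net for $W\subseteq X$ if $W\subseteq\bigcup_{c\in C}B(c,\varepsilon)$. A set $A\subseteq X$ is $\varepsilon$-distinguishable if $d(x,y)>\varepsilon$ for all distinct $x,y\in A$. For $W,A\subseteq X$: $\hat{\mathcal N}^A_\varepsilon(W)$ is the minimal cardinality of an $\varepsilon$-net $C$ for $W$ with $C\subseteq A$, and $\hat{\mathcal N}_\varepsilon(W):=\hat{\mathcal N}^W_\varepsilon(W)$. A set $A$ is maximal $\varepsilon$-distinguishable with respect to $W$ if $A\subseteq W$ is $\varepsilon$-distinguishable and no $\varepsilon$-distinguishable $B\subseteq W$ strictly contains $A$. $\hat{\mathcal M}_\varepsilon(W)$ is the smallest cardinality of a maximal $\varepsilon$-distinguishable set with respect to $W$. $\mathcal M^*_\varepsilon(W)$ is the smallest cardinal number that is $\ge \operatorname{card}(A)$ for every $\varepsilon$-distinguishable $A\subseteq W$. The betweenness exponent $t_0(d)\in[1,\infty]$ is the supremum of all $t>0$ for which $(x,y)\mapsto(d(x,y))^t$ is a metric on $X$; $t_0(d)=\infty$ iff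 $d$ is an ultrametric. Convention: $2^{1/\infty}=1$. *)

theory Defs
  imports "HOL-Analysis.Analysis"
begin

text \<open>The metric space (X,d) is the type 'a with its metric dist; X = UNIV.
Cardinal numbers are represented by card_of of sets (well-orders), compared by ordLeq.\<close>

definition is_metric_fun :: "('a \<Rightarrow> 'a \<Rightarrow> real) \<Rightarrow> bool" where
  "is_metric_fun d \<longleftrightarrow> (\<forall>x y. 0 \<le> d x y) \<and> (\<forall>x y. d x y = 0 \<longleftrightarrow> x = y)
     \<and> (\<forall>x y. d x y = d y x) \<and> (\<forall>x y z. d x z \<le> d x y + d y z)"

definition betweenness_exponent :: "'a::metric_space itself \<Rightarrow> ereal" where
  "betweenness_exponent _ = Sup {ereal t |t. t > 0 \<and>
      is_metric_fun (\<lambda>x y::'a. (dist x y) powr t)}"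

definition bfactor :: "'a::metric_space itself \<Rightarrow> real" where
  "bfactor T = (if betweenness_exponent T = \<infinity> then 1
               else 2 powr (1 / real_of_ereal (betweenness_exponent T)))"

definition is_net :: "real \<Rightarrow> 'a::metric_space set \<Rightarrow> 'a set \<Rightarrow> bool" where
  "is_net e W C \<longleftrightarrow> W \<subseteq> (\<Union>c\<in>C. cball c e)"

definition distinguishable :: "real \<Rightarrow> 'a::metric_space set \<Rightarrow> bool" where
  "distinguishable e A \<longleftrightarrow> (\<forall>x\<in>A. \<forall>y\<in>A. x \<noteq> y \<longrightarrow> dist x y > e)"

definition max_distinguishable :: "real \<Rightarrow> 'a::metric_space set \<Rightarrow> 'a set \<Rightarrow> bool" where
  "max_distinguishable e W A \<longleftrightarrow> A \<subseteq> W \<and> distinguishable e A \<and>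
     \<not> (\<exists>B. B \<subseteq> W \<and> distinguishable e B \<and> A \<subset> B)"

definition Nhat_net_in :: "'a::metric_space set \<Rightarrow> real \<Rightarrow> 'a set \<Rightarrow> 'a rel" where
  "Nhat_net_in A e W = card_of (SOME C. C \<subseteq> A \<and> is_net e W C \<and>
      (\<forall>C'. C' \<subseteq> A \<and> is_net e W C' \<longrightarrow> (card_of C, card_of C') \<in> ordLeq))"

definition Nhat_net :: "real \<Rightarrow> 'a::metric_space set \<Rightarrow> 'a rel" where
  "Nhat_net e W = Nhat_net_in W e W"

definition Mhat_dist :: "real \<Rightarrow> 'a::metric_space set \<Rightarrow> 'a rel" where
  "Mhat_dist e W = card_of (SOME A. max_distinguishable e W A \<and>
      (\<forall>B. max_distinguishable e W B \<longrightarrow> (card_of A, card_of B) \<in> ordLeq))"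

text \<open>Smallest cardinal bounding the cardinalities of all e-distinguishable subsets of W.
 Such a cardinal is at most card W, hence representable as card_of of a set of type 'a.\<close>
definition Mstar_dist :: "real \<Rightarrow> 'a::metric_space set \<Rightarrow> 'a rel" where
  "Mstar_dist e W = card_of (SOME S.
      (\<forall>A. A \<subseteq> W \<and> distinguishable e A \<longrightarrow> (card_of A, card_of S) \<in> ordLeq) \<and>
      (\<forall>T::'a set. (\<forall>A. A \<subseteq> W \<and> distinguishable e A \<longrightarrow> (card_of A, card_of T) \<in> ordLeq)
           \<longrightarrow> (card_of S, card_of T) \<in> ordLeq))"

end

theory Submission
  imports Defs
begin

lemma min_card_exists:
  assumes "P x0"
  shows "\<exists>x. P x \<and> (\<forall>y. P y \<longrightarrow> (card_of x, card_of y) \<in> ordLeq)"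
proof -
  have "\<exists>r \<in> card_of ` Collect P. \<forall>r' \<in> card_of ` Collect P. (r, r') \<in> ordLeq"
    by (rule exists_minim_Well_order) (use assms card_of_Well_order in auto)
  then show ?thesis by auto
qed

lemma net_in_some:
  fixes e :: real and W A C0 :: "'a::metric_space set"
  assumes "C0 \<subseteq> A" "is_net e W C0"
  defines "C \<equiv> (SOME C. C \<subseteq> A \<and> is_net e W C \<and>
      (\<forall>C'. C' \<subseteq> A \<and> is_net e W C' \<longrightarrow> (card_of C, card_of C') \<in> ordLeq))"
  shows "C \<subseteq> A \<and> is_net e W C \<and>
      (\<forall>C'. C' \<subseteq> A \<and> is_net e W C' \<longrightarrow> (card_of C, card_of C') \<in> ordLeq)"
proof -
  have ex: "\<exists>C. C \<subseteq> A \<and> is_net e W C \<and>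
      (\<forall>C'. C' \<subseteq> A \<and> is_net e W C' \<longrightarrow> (card_of C, card_of C') \<in> ordLeq)"
    using min_card_exists[of "\<lambda>C. C \<subseteq> A \<and> is_net e W C" C0] assms by auto
  show ?thesis unfolding C_def by (rule someI_ex[OF ex])
qed

lemma self_net:
  assumes "e > 0" shows "is_net e W W"
  unfolding is_net_def using assms by force

lemma maxdist_exists:
  "\<exists>A. max_distinguishable e W A"
proof -
  let ?F = "{A. A \<subseteq> W \<and> distinguishable e A}"
  have "\<forall>C\<in>chains ?F. \<Union>C \<in> ?F"
  proof
    fix C assume C: "C \<in> chains ?F"
    have "\<Union>C \<subseteq> W" using C unfolding chains_def by auto
    moreover have "distinguishable e (\<Union>C)"
      unfolding distinguishable_def
    proof (intro ballI impI)
      fix x y assume "x \<in> \<Union>C" "y \<in> \<Union>C" "x \<noteq> y"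
      then obtain X Y where XY: "X \<in> C" "Y \<in> C" "x \<in> X" "y \<in> Y" by auto
      have "X \<subseteq> Y \<or> Y \<subseteq> X" using C XY unfolding chains_def chain_subset_def by auto
      moreover have "distinguishable e X" "distinguishable e Y" using C XY unfolding chains_def by auto
      ultimately show "dist x y > e"
      proof (elim disjE)
        assume "X \<subseteq> Y" then show ?thesis using XY \<open>x \<noteq> y\<close> \<open>distinguishable e Y\<close>
          unfolding distinguishable_def by auto
      next
        assume "Y \<subseteq> X" then show ?thesis using XY \<open>x \<noteq> y\<close> \<open>distinguishable e X\<close>
          unfolding distinguishable_def by auto
      qed
    qed
    ultimately show "\<Union>C \<in> ?F" by simp
  qed
  from Zorn_Lemma[OF this] obtain M where M: "M \<in> ?F" "\<forall>X\<in>?F. M \<subseteq> X \<longrightarrow> X = M" by blast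
  have "max_distinguishable e W M" unfolding max_distinguishable_def
  proof (intro conjI notI)
    show "M \<subseteq> W" "distinguishable e M" using M(1) by auto
    assume "\<exists>B. B \<subseteq> W \<and> distinguishable e B \<and> M \<subset> B"
    then obtain B where B: "B \<subseteq> W" "distinguishable e B" "M \<subset> B" by blast
    then have "B = M" using M(2) by blast
    then show False using B(3) by blast
  qed
  then show ?thesis by blast
qed

lemma mhat_some:
  fixes e :: real and W :: "'a::metric_space set"
  defines "A \<equiv> (SOME A. max_distinguishable e W A \<and>
      (\<forall>B. max_distinguishable e W B \<longrightarrow> (card_of A, card_of B) \<in> ordLeq))"
  shows "max_distinguishable e W A \<and>
      (\<forall>B. max_distinguishable e W B \<longrightarrow> (card_of A, card_of B) \<in> ordLeq)"
proof -
  obtain A0 where "max_distinguishable e W A0" using maxdist_exists by blast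
  then have ex: "\<exists>A. max_distinguishable e W A \<and>
      (\<forall>B. max_distinguishable e W B \<longrightarrow> (card_of A, card_of B) \<in> ordLeq)"
    using min_card_exists[of "max_distinguishable e W"] by blast
  show ?thesis unfolding A_def by (rule someI_ex[OF ex])
qed

lemma mstar_some:
  fixes e :: real and W :: "'a::metric_space set"
  defines "S \<equiv> (SOME S::'a set.
      (\<forall>A. A \<subseteq> W \<and> distinguishable e A \<longrightarrow> (card_of A, card_of S) \<in> ordLeq) \<and>
      (\<forall>T::'a::metric_space set. (\<forall>A. A \<subseteq> W \<and> distinguishable e A \<longrightarrow> (card_of A, card_of T) \<in> ordLeq)
           \<longrightarrow> (card_of S, card_of T) \<in> ordLeq))"
  shows "(\<forall>A. A \<subseteq> W \<and> distinguishable e A \<longrightarrow> (card_of A, card_of S) \<in> ordLeq) \<and>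
      (\<forall>T::'a::metric_space set. (\<forall>A. A \<subseteq> W \<and> distinguishable e A \<longrightarrow> (card_of A, card_of T) \<in> ordLeq)
           \<longrightarrow> (card_of S, card_of T) \<in> ordLeq)"
proof -
  have "\<forall>A. A \<subseteq> W \<and> distinguishable e A \<longrightarrow> (card_of A, card_of W) \<in> ordLeq"
    by (auto intro: card_of_mono1)
  then have ex: "\<exists>S::'a set. (\<forall>A. A \<subseteq> W \<and> distinguishable e A \<longrightarrow> (card_of A, card_of S) \<in> ordLeq) \<and>
      (\<forall>T::'a::metric_space set. (\<forall>A. A \<subseteq> W \<and> distinguishable e A \<longrightarrow> (card_of A, card_of T) \<in> ordLeq)
           \<longrightarrow> (card_of S, card_of T) \<in> ordLeq)"
    using min_card_exists[of "\<lambda>T. \<forall>A. A \<subseteq> W \<and> distinguishable e A \<longrightarrow> (card_of A, card_of T) \<in> ordLeq"] by blast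
  show ?thesis unfolding S_def by (rule someI_ex[OF ex])
qed

lemma net_in_props:
  fixes e :: real and W A C0 :: "'a::metric_space set"
  assumes "C0 \<subseteq> A" "is_net e W C0"
  shows "\<exists>C. Nhat_net_in A e W = card_of C \<and> C \<subseteq> A \<and> is_net e W C \<and>
      (\<forall>C'. C' \<subseteq> A \<and> is_net e W C' \<longrightarrow> (card_of C, card_of C') \<in> ordLeq)"
  unfolding Nhat_net_in_def using net_in_some[OF assms] by blast

lemma mhat_props:
  fixes e :: real and W :: "'a::metric_space set"
  shows "\<exists>A. Mhat_dist e W = card_of A \<and> max_distinguishable e W A \<and>
      (\<forall>B. max_distinguishable e W B \<longrightarrow> (card_of A, card_of B) \<in> ordLeq)"
  unfolding Mhat_dist_def using mhat_some by blast

lemma mstar_props: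
  fixes e :: real and W :: "'a::metric_space set"
  shows "\<exists>S. Mstar_dist e W = card_of S \<and>
      (\<forall>A. A \<subseteq> W \<and> distinguishable e A \<longrightarrow> (card_of A, card_of S) \<in> ordLeq) \<and>
      (\<forall>T::'a set. (\<forall>A. A \<subseteq> W \<and> distinguishable e A \<longrightarrow> (card_of A, card_of T) \<in> ordLeq)
           \<longrightarrow> (card_of S, card_of T) \<in> ordLeq)"
  unfolding Mstar_dist_def using mstar_some by blast

lemma one_in_exp:
  "ereal 1 \<in> {ereal t |t. t > 0 \<and> is_metric_fun (\<lambda>x y::'a::metric_space. (dist x y) powr t)}"
proof -
  have "is_metric_fun (\<lambda>x y::'a. (dist x y) powr 1)"
    unfolding is_metric_fun_def by (simp add: dist_commute dist_triangle)
  then show ?thesis by force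
qed

lemma exp_ge1: "betweenness_exponent TYPE('a::metric_space) \<ge> 1"
proof -
  have "ereal 1 \<le> Sup {ereal t |t. t > 0 \<and> is_metric_fun (\<lambda>x y::'a. (dist x y) powr t)}"
    by (rule Sup_upper[OF one_in_exp])
  then show ?thesis unfolding betweenness_exponent_def by (simp add: one_ereal_def)
qed

lemma close_points:
  fixes a a' c :: "'a::metric_space" and e :: real
  assumes e: "e > 0" and ac: "dist a c \<le> e" and a'c: "dist a' c \<le> e"
  shows "dist a a' \<le> bfactor TYPE('a) * e"
proof (rule ccontr)
  let ?S = "{ereal t |t. t > 0 \<and> is_metric_fun (\<lambda>x y::'a. (dist x y) powr t)}"
  let ?t0 = "betweenness_exponent TYPE('a)"
  define D where "D = dist a a'"
  define b where "b = bfactor TYPE('a)"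
  assume "\<not> dist a a' \<le> bfactor TYPE('a) * e"
  then have Db: "D > b * e" unfolding D_def b_def by simp
  have t0: "?t0 \<ge> 1" by (rule exp_ge1)
  define r where "r = D / e"
  have rb: "r > b" using Db e unfolding r_def by (simp add: field_simps)
  have b1: "b \<ge> 1"
  proof (cases "?t0 = \<infinity>")
    case True then show ?thesis unfolding b_def bfactor_def by simp
  next
    case False
    then obtain t0r where "?t0 = ereal t0r" using t0 by (cases ?t0) auto
    then have "real_of_ereal ?t0 \<ge> 1" using t0 by (simp add: one_ereal_def)
    then show ?thesis unfolding b_def bfactor_def using False by (simp add: ge_one_powr_ge_zero)
  qed
  then have r1: "r > 1" using rb by simp
  define tau where "tau = log r 2"
  have "ereal tau < ?t0"
  proof (cases "?t0 = \<infinity>")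
    case True then show ?thesis by simp
  next
    case False
    then obtain t0r where t0r: "?t0 = ereal t0r" using t0
      by (cases ?t0) auto
    then have t0r1: "t0r \<ge> 1" using t0 by (simp add: one_ereal_def)
    have "r > 2 powr (1 / t0r)" using rb False t0r unfolding b_def bfactor_def by simp
    then have "ln r > ln (2 powr (1 / t0r))" using r1
      by (subst ln_less_cancel_iff) auto
    moreover have "ln (2 powr (1 / t0r)) = ln 2 / t0r" by (simp add: ln_powr)
    ultimately have "ln r > ln 2 / t0r" by linarith
    then have "ln 2 / ln r < t0r" using t0r1 r1 by (simp add: field_simps)
    then have "tau < t0r" unfolding tau_def log_def by simp
    then show ?thesis using t0r by simp
  qed
  then obtain x where x: "x \<in> ?S" "ereal tau < x"
    unfolding betweenness_exponent_def by (auto simp: less_Sup_iff)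
  then obtain t where t: "x = ereal t" "t > 0" "is_metric_fun (\<lambda>x y::'a. (dist x y) powr t)" by blast
  have tt: "tau < t" using x t by simp
  have "r powr t > r powr tau" using tt r1 by simp
  also have "r powr tau = 2" unfolding tau_def using r1 by simp
  finally have r2: "r powr t > 2" .
  have "D powr t \<le> dist a c powr t + dist c a' powr t"
    using t(3) unfolding is_metric_fun_def D_def by blast
  also have "\<dots> \<le> e powr t + e powr t"
    using ac a'c t(2) by (intro add_mono powr_mono2) (auto simp: dist_commute)
  finally have le: "D powr t \<le> 2 * e powr t" by simp
  have "D = r * e" unfolding r_def using e by simp
  then have "D powr t = r powr t * e powr t" using r1 e by (simp add: powr_mult)
  also have "\<dots> > 2 * e powr t" using r2 e by simp
  finally show False using le by simp
qed

theorem lemma2p6: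
  fixes W :: "'a::metric_space set" and e :: real
  assumes "e > 0"
  shows "(Mstar_dist (bfactor TYPE('a) * e) W, Nhat_net_in (UNIV::'a set) e W) \<in> ordLeq
       \<and> (Nhat_net_in (UNIV::'a set) e W, Nhat_net e W) \<in> ordLeq
       \<and> (Nhat_net e W, Mhat_dist e W) \<in> ordLeq
       \<and> (Mhat_dist e W, Mstar_dist e W) \<in> ordLeq"
proof -
  have netU: "is_net e W UNIV" unfolding is_net_def
  proof
    fix w assume "w \<in> W" show "w \<in> (\<Union>c\<in>UNIV. cball c e)"
      using assms by (intro UN_I[of w]) auto
  qed
  obtain C1 where C1: "Nhat_net_in (UNIV::'a set) e W = card_of C1" "is_net e W C1"
      "\<forall>C'. C' \<subseteq> UNIV \<and> is_net e W C' \<longrightarrow> (card_of C1, card_of C') \<in> ordLeq"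
    using net_in_props[OF _ netU, of UNIV] by blast
  obtain C2 where C2: "Nhat_net e W = card_of C2" "C2 \<subseteq> W" "is_net e W C2"
      "\<forall>C'. C' \<subseteq> W \<and> is_net e W C' \<longrightarrow> (card_of C2, card_of C') \<in> ordLeq"
    using net_in_props[OF order_refl self_net[OF assms], of W] unfolding Nhat_net_def by blast
  obtain A where A: "Mhat_dist e W = card_of A" "max_distinguishable e W A"
    using mhat_props by blast
  obtain S where S: "Mstar_dist e W = card_of S"
      "\<forall>A. A \<subseteq> W \<and> distinguishable e A \<longrightarrow> (card_of A, card_of S) \<in> ordLeq"
    using mstar_props by blast
  obtain S' where S': "Mstar_dist (bfactor TYPE('a) * e) W = card_of S'"
      "\<forall>T::'a set. (\<forall>A. A \<subseteq> W \<and> distinguishable (bfactor TYPE('a) * e) A \<longrightarrow> (card_of A, card_of T) \<in> ordLeq)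
           \<longrightarrow> (card_of S', card_of T) \<in> ordLeq"
    using mstar_props by blast
  have p1: "(card_of S', card_of C1) \<in> ordLeq"
  proof -
    have "(card_of B, card_of C1) \<in> ordLeq"
      if B: "B \<subseteq> W" "distinguishable (bfactor TYPE('a) * e) B" for B
    proof -
      define f where "f a = (SOME c. c \<in> C1 \<and> a \<in> cball c e)" for a
      have f: "f a \<in> C1 \<and> a \<in> cball (f a) e" if "a \<in> B" for a
      proof -
        have "\<exists>c. c \<in> C1 \<and> a \<in> cball c e" using C1(2) B(1) that unfolding is_net_def by blast
        then show ?thesis unfolding f_def by (rule someI_ex)
      qed
      have "inj_on f B"
      proof (rule inj_onI, rule ccontr)
        fix x y assume xy: "x \<in> B" "y \<in> B" "f x = f y" "x \<noteq> y"
        have "dist x y \<le> bfactor TYPE('a) * e"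
          using close_points[OF assms, of x "f x" y] f[OF xy(1)] f[OF xy(2)] xy(3)
          by (simp add: dist_commute)
        moreover have "dist x y > bfactor TYPE('a) * e" using B(2) xy unfolding distinguishable_def by blast
        ultimately show False by simp
      qed
      moreover have "f ` B \<subseteq> C1" using f by blast
      ultimately show ?thesis using card_of_ordLeq by blast
    qed
    then show ?thesis using S'(2) by blast
  qed
  have p2: "(card_of C1, card_of C2) \<in> ordLeq" using C1(3) C2(2,3) by blast
  have "is_net e W A"
    unfolding is_net_def
  proof
    fix w assume w: "w \<in> W"
    show "w \<in> (\<Union>c\<in>A. cball c e)"
    proof (rule ccontr)
      assume nw: "w \<notin> (\<Union>c\<in>A. cball c e)"
      then have far: "\<forall>c\<in>A. dist c w > e" by auto
      have wA: "w \<notin> A" using nw assms by force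
      have "insert w A \<subseteq> W" using A(2) w unfolding max_distinguishable_def by blast
      moreover have "distinguishable e (insert w A)"
        using A(2) far unfolding max_distinguishable_def distinguishable_def
        by (auto simp: dist_commute)
      moreover have "A \<subset> insert w A" using wA by blast
      ultimately show False using A(2) unfolding max_distinguishable_def by blast
    qed
  qed
  then have p3: "(card_of C2, card_of A) \<in> ordLeq" using C2(4) A(2) unfolding max_distinguishable_def by blast
  have p4: "(card_of A, card_of S) \<in> ordLeq" using S(2) A(2) unfolding max_distinguishable_def by blast
  show ?thesis using p1 p2 p3 p4 C1(1) C2(1) A(1) S(1) S'(1) by simp
qed

end
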